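(* Let $\sigma\ge 2$, $k\ge 1$, let $U$ be any rotation of a $\sigma$-ary de Bruijn cycle of order $k$, and let $w_{\mathrm{lin}}=U\,U[0..k-2]$. Let $\chi$ be the size of a smallest suffixient set for $w_{\mathrm{lin}}\$$ and $r$ the number of runs of $\operatorname{BWT}(w_{\mathrm{lin}}\$)$. Then $$\frac{\chi}{r}<\frac{\sigma}{\sigma-1}.$$
   Context: A $\sigma$-ary de Bruijn cycle of order $k$ is a cyclic word of length $\sigma^k$ over an ordered alphabet $\Sigma$ of size $\sigma$ in which every word of $\Sigma^k$ occurs exactly once as a cyclic length-$k$ window. Strings are $0$-indexed; $v[0..j]$ is the prefix ending at position $j$. $\$\notin\Sigma$ is an end-marker smaller than all letters, appended once. $\operatorname{BWT}(v)$ is the last column of the matrix of lexicographically sorted cyclic rotations of $v$; a run is a maximal block of one repeated symbol. For a string $v$ over $\Sigma\cup\{\$\}$, a substring $x$ (possibly empty) is right-maximal if $xa,xb$ are substrings of $v$ for two distinct symbols $a\ne b$; these words $xa$ are the right-extensions of $v$. A set $S$ of positions of $v$ is suffixient if every right-extension of $v$ is a suffix of $v[0..j]$ for some $j\in S$. *)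

theory Defs
  imports Complex_Main "HOL-Library.Option_ord" "HOL-Library.List_Lexorder" "HOL-Library.Sublist"
begin

(* Alphabet Sigma: a finite subset of a linearly ordered type 'a.
   Strings over Sigma \<union> {$} are lists over 'a option, with $ = None,
   which is smaller than every letter Some a (Option_ord). *)

definition cyc_window :: "'a list \<Rightarrow> nat \<Rightarrow> nat \<Rightarrow> 'a list" where
  "cyc_window U i k = map (\<lambda>j. U ! ((i + j) mod length U)) [0..<k]"

definition de_bruijn_cycle :: "'a set \<Rightarrow> nat \<Rightarrow> 'a list \<Rightarrow> bool" where
  "de_bruijn_cycle \<Sigma> k U \<longleftrightarrow>
     length U = card \<Sigma> ^ k \<and> set U \<subseteq> \<Sigma> \<and>
     (\<forall>x. length x = k \<and> set x \<subseteq> \<Sigma> \<longrightarrow>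
        card {i. i < length U \<and> cyc_window U i k = x} = 1)"

definition BWT :: "'b::linorder list \<Rightarrow> 'b list" where
  "BWT v = map last (sort (map (\<lambda>i. rotate i v) [0..<length v]))"

definition runs :: "'b list \<Rightarrow> nat" where
  "runs xs = length (remdups_adj xs)"

definition right_maximal :: "'b list \<Rightarrow> 'b list \<Rightarrow> bool" where
  "right_maximal v x \<longleftrightarrow> (\<exists>a b. a \<noteq> b \<and> sublist (x @ [a]) v \<and> sublist (x @ [b]) v)"

definition right_extensions :: "'b list \<Rightarrow> 'b list set" where
  "right_extensions v = {x @ [a] | x a. right_maximal v x \<and> sublist (x @ [a]) v}"

definition suffixient :: "'b list \<Rightarrow> nat set \<Rightarrow> bool" where
  "suffixient v S \<longleftrightarrow> S \<subseteq> {..<length v} \<and>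
     (\<forall>e \<in> right_extensions v. \<exists>j \<in> S. suffix e (take (Suc j) v))"

definition chi :: "'b list \<Rightarrow> nat" where
  "chi v = Min {card S | S. suffixient v S}"

end

theory Submission
  imports Defs
begin

lemma runs_Cons2: "runs (a # b # xs) = runs (b # xs) + (if a = b then 0 else 1)"
  unfolding runs_def by simp

lemma runs_single: "runs [a] = 1" unfolding runs_def by simp

lemma runs_Cons_le: "runs xs \<le> runs (a # xs)"
  by (cases xs) (auto simp: runs_Cons2 runs_single runs_def)

lemma runs_count:
  "sorted (map fst ps) \<Longrightarrow> ps \<noteq> [] \<Longrightarrow>
   card (set ps \<inter> A) + 1 \<le> runs (map snd ps) + card (fst ` (set ps \<inter> A))"
proof (induction ps)
  case Nil then show ?case by simp
next
  case (Cons p qs)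
  show ?case
  proof (cases qs)
    case Nil
    then show ?thesis by (cases "p \<in> A") (auto simp: runs_single)
  next
    case (Cons q qs')
    have srt: "sorted (map fst qs)" using Cons.prems by simp
    have IH: "card (set qs \<inter> A) + 1 \<le> runs (map snd qs) + card (fst ` (set qs \<inter> A))"
      using Cons.IH srt Cons by simp
    have R: "runs (map snd (p # qs)) = runs (map snd qs) + (if snd p = snd q then 0 else 1)"
      using Cons by (simp add: runs_Cons2)
    show ?thesis
    proof (cases "p \<in> A \<and> p \<notin> set qs")
      case False
      then have "set (p # qs) \<inter> A = set qs \<inter> A" by auto
      then show ?thesis using IH R by simp
    next
      case True
      have c1: "card (set (p # qs) \<inter> A) = card (set qs \<inter> A) + 1"
      proof -
        have "set (p # qs) \<inter> A = insert p (set qs \<inter> A)" using True by auto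
        then show ?thesis using True by simp
      qed
      show ?thesis
      proof (cases "fst p \<in> fst ` (set qs \<inter> A)")
        case False
        have "fst ` (set (p # qs) \<inter> A) = insert (fst p) (fst ` (set qs \<inter> A))" using True by auto
        then have "card (fst ` (set (p # qs) \<inter> A)) = card (fst ` (set qs \<inter> A)) + 1"
          using False by simp
        then show ?thesis using IH R c1 by simp
      next
        case kin: True
        then obtain p' where p': "p' \<in> set qs" "fst p' = fst p" by auto
        have s1: "fst p \<le> fst q" using Cons.prems Cons by simp
        have s2: "fst q \<le> fst p'" using srt Cons p' by auto
        have "fst q = fst p" using s1 s2 p' by simp
        then have "snd p \<noteq> snd q" using True Cons by (metis list.set_intros(1) prod.expand)
        moreover have "fst ` (set (p # qs) \<inter> A) = fst ` (set qs \<inter> A)" using kin by auto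
        ultimately show ?thesis using IH R c1 by simp
      qed
    qed
  qed
qed

lemma take_mono_list: "(xs::'b::linorder list) \<le> ys \<Longrightarrow> take n xs \<le> take n ys"
proof (induction n arbitrary: xs ys)
  case 0 then show ?case by simp
next
  case (Suc n)
  show ?case
  proof (cases xs)
    case Nil then show ?thesis by simp
  next
    case (Cons a as)
    then obtain b bs where "ys = b # bs" using Suc.prems by (cases ys) auto
    then show ?thesis using Suc Cons by (auto simp: order_le_less)
  qed
qed


lemma mod_shift: fixes L m i j :: nat assumes "L > 0"
  shows "(m + (i + (L - m mod L)) mod L + j) mod L = (i + j) mod L"
proof -
  have r: "m mod L < L" using assms by simp
  have "(m + (i + (L - m mod L)) mod L + j) mod L = (m mod L + (i + (L - m mod L)) + j) mod L"
    by (metis mod_add_left_eq mod_add_right_eq add.assoc)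
  also have "m mod L + (i + (L - m mod L)) + j = (i + j) + L" using r by simp
  also have "((i + j) + L) mod L = (i + j) mod L" by simp
  finally show ?thesis .
qed

lemma chi_bound:
  fixes U :: "'a list"
  assumes "k - 1 \<le> length U" "v = map Some (U @ take (k-1) U) @ [None]" "k \<ge> 1"
  shows "chi v \<le> length U + 1"
proof -
  define L where "L = length U"
  define S where "S = {k-1..L+k-1}"
  have lv: "length v = L + k" using assms unfolding L_def by simp
  have v1: "v ! i = Some (U ! i)" if "i < L" for i
    using assms that unfolding L_def by (simp add: nth_append)
  have v2: "v ! (L + i) = Some (U ! i)" if "i < k - 1" for i
    using assms that unfolding L_def by (simp add: nth_append)
  have per: "v ! (i + L) = v ! i" if "i < k - 1" for i
  proof -
    have "i < L" using that assms unfolding L_def by simp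
    then show ?thesis using v1[of i] v2[OF that] by (metis add.commute)
  qed
  have suff: "suffixient v S"
    unfolding suffixient_def
  proof (intro conjI ballI)
    show "S \<subseteq> {..<length v}" using lv assms unfolding S_def by auto
  next
    fix e assume "e \<in> right_extensions v"
    then have "sublist e v" unfolding right_extensions_def by auto
    then obtain ps ss where vs: "v = ps @ e @ ss" unfolding sublist_def by auto
    show "\<exists>j\<in>S. suffix e (take (Suc j) v)"
    proof (cases "e = []")
      case True
      then show ?thesis unfolding S_def by (intro bexI[of _ "k-1"]) auto
    next
      case ne: False
      define j where "j = length ps + length e - 1"
      show ?thesis
      proof (cases "j \<ge> k - 1")
        case True
        have "take (Suc j) v = ps @ e" using vs ne unfolding j_def by simp
        moreover have "j \<in> S" using True lv vs ne unfolding S_def j_def by auto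
        ultimately show ?thesis by (intro bexI[of _ j]) (auto simp: suffix_def)
      next
        case False
        have le: "length ps + length e \<le> k - 1" using False ne unfolding j_def by simp
        have eq: "take (length e) (drop (length ps + L) v) = e"
        proof (rule nth_equalityI)
          show "length (take (length e) (drop (length ps + L) v)) = length e"
            using lv le by simp
        next
          fix t assume "t < length (take (length e) (drop (length ps + L) v))"
          then have t: "t < length e" by simp
          have "take (length e) (drop (length ps + L) v) ! t = v ! (length ps + t + L)"
            using t lv le by (simp add: add.commute add.left_commute)
          also have "\<dots> = v ! (length ps + t)" using per t le by simp
          also have "\<dots> = e ! t" using vs t by (simp add: nth_append)
          finally show "take (length e) (drop (length ps + L) v) ! t = e ! t" .
        qed
        have tk: "take (Suc (j + L)) v = take (length ps + L) v @ take (length e) (drop (length ps + L) v)"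
        proof -
          have "Suc (j + L) = length ps + L + length e" using ne unfolding j_def by (cases e) auto
          then show ?thesis by (metis take_add)
        qed
        have "j + L \<in> S" using False le ne assms unfolding S_def j_def L_def by auto
        then show ?thesis using tk eq by (intro bexI[of _ "j + L"]) (auto simp: suffix_def)
      qed
    qed
  qed
  have fin: "finite {card S |S. suffixient v S}"
  proof (rule finite_subset[of _ "{..length v}"])
    show "{card S |S. suffixient v S} \<subseteq> {..length v}"
    proof
      fix c assume "c \<in> {card S |S. suffixient v S}"
      then obtain T where "c = card T" "suffixient v T" by auto
      then have "T \<subseteq> {..<length v}" unfolding suffixient_def by auto
      then have "card T \<le> length v" using card_mono[of "{..<length v}" T] by simp
      then show "c \<in> {..length v}" using \<open>c = card T\<close> by simp
    qed
  qed simp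
  have "chi v \<le> card S" unfolding chi_def using fin suff by (intro Min_le) auto
  also have "card S = L + 1" unfolding S_def using assms by simp
  finally show ?thesis unfolding L_def .
qed


lemma runs_bound:
  fixes \<Sigma> :: "'a::linorder set" and D U :: "'a list"
  assumes fin: "finite \<Sigma>" and cs: "card \<Sigma> = \<sigma>" and s2: "\<sigma> \<ge> 2" and k1: "k \<ge> 1"
    and db: "de_bruijn_cycle \<Sigma> k D" and UD: "U = rotate m D"
    and kL: "k - 1 \<le> length D"
    and vdef: "v = map Some (U @ take (k-1) U) @ [None]"
  shows "\<sigma> ^ k + 1 \<le> runs (BWT v) + \<sigma> ^ (k - 1)"
proof -
  define L where "L = length D"
  have LD: "L = \<sigma> ^ k" using db cs unfolding de_bruijn_cycle_def L_def by simp
  have Lpos: "L > 0" using LD s2 by simp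
  have lU: "length U = L" using UD L_def by simp
  have lv: "length v = L + k" using vdef lU kL L_def k1 by simp
  define w where "w = U @ take (k-1) U"
  have vw: "v ! t = Some (w ! t)" if "t < L + k - 1" for t
  proof -
    have "t < length (map Some (U @ take (k-1) U))" using that lU kL L_def by simp
    then show ?thesis using vdef unfolding w_def by (simp add: nth_append del: map_append)
  qed
  have wU: "w ! t = U ! (t mod L)" if "t < L + k - 1" for t
  proof (cases "t < L")
    case True then show ?thesis unfolding w_def using lU by (simp add: nth_append)
  next
    case False
    then have "t mod L = t - L" using that kL L_def
    proof -
      have "t - L < L" using that kL L_def False by linarith
      then show ?thesis using False by (simp add: le_mod_geq)
    qed
    then show ?thesis unfolding w_def using lU False that kL L_def by (simp add: nth_append)
  qed
  have UDn: "U ! s = D ! ((m + s) mod L)" if "s < L" for s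
    using UD that lU L_def by (simp add: nth_rotate)
  define rs where "rs = sort (map (\<lambda>i. rotate i v) [0..<length v])"
  define ps where "ps = map (\<lambda>r. (take (k-1) r, last r)) rs"
  have bwt: "BWT v = map snd ps" unfolding BWT_def ps_def rs_def by simp
  have sorted_ps: "sorted (map fst ps)"
  proof -
    have "sorted rs" unfolding rs_def by simp
    then have "sorted_wrt (\<lambda>x y. take (k-1) x \<le> take (k-1) y) rs"
      by (rule sorted_wrt_mono_rel[rotated]) (auto intro: take_mono_list)
    then show ?thesis unfolding ps_def by (simp add: sorted_map)
  qed
  have ps_ne: "ps \<noteq> []"
  proof -
    have "length ps = length v" unfolding ps_def rs_def by simp
    then show ?thesis using lv k1 by auto
  qed
  define K0 where "K0 = map Some ` {y. set y \<subseteq> \<Sigma> \<and> length y = k - 1}"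
  define A where "A = K0 \<times> (Some ` \<Sigma>)"
  have AP: "A \<subseteq> set ps"
  proof
    fix z assume "z \<in> A"
    then obtain y a where z: "z = (map Some y, Some a)" and y: "set y \<subseteq> \<Sigma>" "length y = k - 1"
      and a: "a \<in> \<Sigma>" unfolding A_def K0_def by auto
    have "length (a # y) = k \<and> set (a # y) \<subseteq> \<Sigma>" using y a k1 by auto
    then have "card {i. i < length D \<and> cyc_window D i k = a # y} = 1"
      using db unfolding de_bruijn_cycle_def by blast
    then obtain i where i: "i < L" "cyc_window D i k = a # y" unfolding L_def
      by (metis (mono_tags, lifting) card_1_singletonE mem_Collect_eq singletonI)
    have Di: "D ! ((i + j) mod L) = (a # y) ! j" if "j < k" for j
    proof -
      have "cyc_window D i k ! j = D ! ((i + j) mod L)"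
        unfolding cyc_window_def L_def using that by simp
      then show ?thesis using i by simp
    qed
    define i' where "i' = (i + (L - m mod L)) mod L"
    have i'L: "i' < L" unfolding i'_def using Lpos by simp
    have wi: "w ! (i' + j) = (a # y) ! j" if "j < k" for j
    proof -
      have "w ! (i' + j) = U ! ((i' + j) mod L)" using wU i'L that by simp
      also have "\<dots> = D ! ((m + (i' + j) mod L) mod L)" using UDn Lpos by simp
      also have "(m + (i' + j) mod L) mod L = (m + i' + j) mod L"
        by (metis mod_add_right_eq add.assoc)
      also have "\<dots> = (i + j) mod L" unfolding i'_def using mod_shift[OF Lpos] by simp
      finally show ?thesis using Di that by simp
    qed
    define p where "p = Suc i'"
    have pv: "p < length v" using i'L lv k1 unfolding p_def by simp
    have rot: "rotate p v = drop p v @ take p v"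
      using pv by (simp add: rotate_drop_take)
    have t1: "take (k-1) (rotate p v) = map Some y"
    proof -
      have "take (k-1) (rotate p v) = take (k-1) (drop p v)"
        using rot pv lv i'L unfolding p_def by simp
      also have "\<dots> = map Some y"
      proof (rule nth_equalityI)
        show "length (take (k - 1) (drop p v)) = length (map Some y)"
          using y lv i'L unfolding p_def by simp
      next
        fix j assume "j < length (take (k - 1) (drop p v))"
        then have j: "j < k - 1" by simp
        have "take (k - 1) (drop p v) ! j = v ! (i' + Suc j)"
          using j lv i'L unfolding p_def by simp
        also have "\<dots> = Some (w ! (i' + Suc j))" using vw j i'L by simp
        also have "\<dots> = Some ((a # y) ! Suc j)" using wi[of "Suc j"] j by simp
        finally show "take (k - 1) (drop p v) ! j = map Some y ! j" using j y by simp
      qed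
      finally show ?thesis .
    qed
    have t2: "last (rotate p v) = Some a"
    proof -
      have "take p v \<noteq> []" using pv unfolding p_def by (cases v) auto
      then have "last (rotate p v) = last (take p v)" using rot by (simp only: last_append) simp
      also have "\<dots> = v ! i'" using pv unfolding p_def by (simp add: take_Suc_conv_app_nth)
      also have "\<dots> = Some (w ! (i' + 0))" using vw i'L k1 by simp
      also have "\<dots> = Some a" using wi[of 0] k1 by simp
      finally show ?thesis .
    qed
    have "rotate p v \<in> set rs" unfolding rs_def using pv by simp
    then show "z \<in> set ps" unfolding ps_def z using t1 t2 by (auto intro: image_eqI[of _ _ "rotate p v"])
  qed
  have cK0: "card K0 = \<sigma> ^ (k - 1)"
  proof -
    have "inj (map Some)" using list.inj_map[OF inj_Some] .
    then have "card K0 = card {y. set y \<subseteq> \<Sigma> \<and> length y = k - 1}"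
      unfolding K0_def by (meson card_image inj_on_subset subset_UNIV)
    then show ?thesis using card_lists_length_eq[OF fin] cs by simp
  qed
  have cA: "card A = \<sigma> ^ (k - 1) * \<sigma>"
    unfolding A_def using cK0 cs by (simp add: card_cartesian_product card_image)
  have "\<Sigma> \<noteq> {}" using cs s2 by auto
  then have fA: "fst ` A = K0" unfolding A_def by auto
  have "card (set ps \<inter> A) + 1 \<le> runs (map snd ps) + card (fst ` (set ps \<inter> A))"
    by (rule runs_count[OF sorted_ps ps_ne])
  moreover have "set ps \<inter> A = A" using AP by auto
  moreover have "\<sigma> ^ (k - 1) * \<sigma> = \<sigma> ^ k" using k1 by (metis Suc_diff_1 less_le_trans less_numeral_extra(1) power_Suc2 k1 le_eq_less_or_eq)
  ultimately show ?thesis using cA fA cK0 bwt by simp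
qed


theorem theorem4:
  fixes \<Sigma> :: "'a::linorder set" and \<sigma> k m :: nat and D U :: "'a list"
  assumes "finite \<Sigma>" and "card \<Sigma> = \<sigma>" and "\<sigma> \<ge> 2" and "k \<ge> 1"
    and "de_bruijn_cycle \<Sigma> k D"
    and "U = rotate m D"
  shows "let w_lin = U @ take (k - 1) U;
             v = map Some w_lin @ [None]
         in real (chi v) / real (runs (BWT v)) < real \<sigma> / (real \<sigma> - 1)"
proof -
  define v where "v = map Some (U @ take (k - 1) U) @ [None]"
  define P where "P = \<sigma> ^ (k - 1)"
  have LD: "length D = \<sigma> ^ k" using assms(5) assms(2) unfolding de_bruijn_cycle_def by simp
  have sk: "\<sigma> ^ k = \<sigma> * P" unfolding P_def using assms(4)
    by (metis Suc_diff_1 le_eq_less_or_eq less_le_trans less_numeral_extra(1) power_Suc)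
  have "k < 2 ^ k" by (rule less_exp)
  also have "(2::nat) ^ k \<le> \<sigma> ^ k" using assms(3) by (rule power_mono) simp
  finally have kL: "k - 1 \<le> length D" using LD by simp
  have lU: "length U = length D" using assms(6) by simp
  have c: "chi v \<le> \<sigma> * P + 1" using chi_bound[of k U v] kL lU LD sk assms(4) v_def by simp
  have r: "\<sigma> * P + 1 \<le> runs (BWT v) + P"
    using runs_bound[OF assms(1-6) kL v_def] sk P_def by simp
  have P1: "P \<ge> 1" unfolding P_def using assms(3) by simp
  define s where "s = real \<sigma>"
  define cc where "cc = real (chi v)"
  define rr where "rr = real (runs (BWT v))"
  define pp where "pp = real P"
  have s2: "s \<ge> 2" using assms(3) unfolding s_def by simp
  have p1: "pp \<ge> 1" using P1 unfolding pp_def by simp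
  have c': "cc \<le> s * pp + 1" using c unfolding cc_def s_def pp_def
    by (metis of_nat_1 of_nat_add of_nat_le_iff of_nat_mult)
  have r': "s * pp + 1 \<le> rr + pp" using r unfolding rr_def s_def pp_def
    by (metis of_nat_1 of_nat_add of_nat_le_iff of_nat_mult)
  have rpos: "rr > 0"
  proof -
    have "s * pp \<ge> 2 * pp" using s2 p1 by (intro mult_right_mono) auto
    then show ?thesis using r' p1 by linarith
  qed
  have h1: "cc * (s - 1) \<le> (s * pp + 1) * (s - 1)" using c' s2 by (intro mult_right_mono) auto
  have h2: "s * (s * pp + 1 - pp) \<le> s * rr" using r' s2 by (intro mult_left_mono) auto
  have key: "cc * (s - 1) < s * rr" using h1 h2 by (simp add: algebra_simps)
  have "cc / rr < s / (s - 1)" using key rpos s2 by (simp add: field_simps)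
  then show ?thesis unfolding Let_def v_def[symmetric] cc_def rr_def s_def .
qed

end
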